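(* Let $\Omega=x\frac{d}{dx}$. For functions $f,g$ possessing all necessary derivatives and every integer $n\ge 1$, \[ \Omega^n (f\circ g) = \sum_{\pi\in\Pi_n} \left( f^{(|\pi|)}\circ g \right) \prod_{B\in \pi} \Omega^{|B|}g. \]
   Context: $\Pi_n$ is the set of all set partitions of $[n]=\{1,\dots,n\}$; for $\pi\in\Pi_n$, $|\pi|$ is its number of blocks and $|B|$ the size of a block $B$. $f^{(j)}$ is the $j$th derivative of $f$. *)

theory Defs
  imports "HOL-Analysis.Analysis" "HOL-Library.Disjoint_Sets"
begin

definition Omega :: "(real \<Rightarrow> real) \<Rightarrow> real \<Rightarrow> real" where
  "Omega h = (\<lambda>x. x * deriv h x)"

end

theory Submission
  imports Defs
begin


definition smooth :: "(real \<Rightarrow> real) \<Rightarrow> bool" where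
  "smooth h \<longleftrightarrow> (\<forall>k y. (deriv ^^ k) h differentiable at y)"

lemma smooth_D: "smooth h \<Longrightarrow> ((deriv ^^ k) h has_real_derivative (deriv ^^ Suc k) h y) (at y)"
  unfolding smooth_def by (simp add: DERIV_deriv_iff_real_differentiable)

lemma smooth_deriv: "smooth h \<Longrightarrow> smooth (deriv h)"
  unfolding smooth_def by (metis comp_apply funpow_Suc_right)

lemma deriv_mult_x:
  assumes "smooth h"
  shows "(deriv ^^ Suc k) (\<lambda>x. x * h x) = (\<lambda>x. x * (deriv ^^ Suc k) h x + real (Suc k) * (deriv ^^ k) h x)"
proof (induction k)
  case 0
  have "deriv (\<lambda>x. x * h x) y = y * deriv h y + h y" for y
    using smooth_D[OF assms, of 0 y]
    by (intro DERIV_imp_deriv) (auto intro!: derivative_eq_intros)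
  then show ?case by auto
next
  case (Suc k)
  have "deriv (\<lambda>x. x * (deriv ^^ Suc k) h x + real (Suc k) * (deriv ^^ k) h x) y =
    y * (deriv ^^ Suc (Suc k)) h y + real (Suc (Suc k)) * (deriv ^^ Suc k) h y" for y
    using smooth_D[OF assms, of "Suc k" y] smooth_D[OF assms, of k y]
    by (intro DERIV_imp_deriv) (auto intro!: derivative_eq_intros simp: algebra_simps)
  moreover have "(deriv ^^ Suc (Suc k)) (\<lambda>x. x * h x) = deriv ((deriv ^^ Suc k) (\<lambda>x. x * h x))"
    by (simp only: funpow.simps(2) comp_def)
  ultimately show ?case using Suc by (simp only:)
qed

lemma smooth_mult_x: "smooth h \<Longrightarrow> smooth (\<lambda>x. x * h x)"
  unfolding smooth_def
proof (intro allI)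
  fix k y assume s: "\<forall>k y. (deriv ^^ k) h differentiable at y"
  hence sm: "smooth h" unfolding smooth_def .
  show "(deriv ^^ k) (\<lambda>x. x * h x) differentiable at y"
  proof (cases k)
    case 0
    have "h differentiable at y" using s[rule_format, of 0 y] by simp
    then show ?thesis using 0 by (auto intro!: derivative_intros)
  next
    case (Suc m)
    have e: "(deriv ^^ k) (\<lambda>x. x * h x) = (\<lambda>x. x * (deriv ^^ Suc m) h x + real (Suc m) * (deriv ^^ m) h x)"
      using Suc deriv_mult_x[OF sm, of m] by (simp only:)
    have "(\<lambda>x. x * (deriv ^^ Suc m) h x + real (Suc m) * (deriv ^^ m) h x) differentiable at y"
      using s[rule_format, of "Suc m" y] s[rule_format, of m y] by (auto intro!: derivative_intros)
    then show ?thesis unfolding e .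
  qed
qed

lemma smooth_Omega: "smooth h \<Longrightarrow> smooth (Omega h)"
  unfolding Omega_def by (intro smooth_mult_x smooth_deriv)

lemma smooth_Omega_pow: "smooth h \<Longrightarrow> smooth ((Omega ^^ m) h)"
  by (induction m) (auto intro: smooth_Omega)



lemma part_ins1:
  assumes "partition_on A P" "a \<notin> A"
  shows "partition_on (insert a A) (insert {a} P)"
  using assms unfolding partition_on_def disjoint_def by auto

lemma part_ins2:
  assumes "partition_on A P" "a \<notin> A" "B \<in> P"
  shows "partition_on (insert a A) (insert (insert a B) (P - {B}))"
proof -
  have d: "C \<inter> D = {}" if "C \<in> P" "D \<in> P" "C \<noteq> D" for C D
    using assms(1) that unfolding partition_on_def disjoint_def by auto
  have u: "\<Union>P = A" "{} \<notin> P" using assms(1) unfolding partition_on_def by auto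
  show ?thesis
  proof (rule partition_onI)
    show "\<Union>(insert (insert a B) (P - {B})) = insert a A" using u assms(3) by auto
    show "{} \<notin> insert (insert a B) (P - {B})" using u by auto
    fix p q assume "p \<in> insert (insert a B) (P - {B})" "q \<in> insert (insert a B) (P - {B})" "p \<noteq> q"
    then show "disjnt p q" using d assms u unfolding disjnt_def by auto
  qed
qed

lemma inj1:
  assumes "a \<notin> A"
  shows "inj_on (insert {a}) {P. partition_on A P}"
proof (rule inj_onI)
  fix P P' assume h: "P \<in> {P. partition_on A P}" "P' \<in> {P. partition_on A P}" "insert {a} P = insert {a} P'"
  have "{a} \<notin> P" "{a} \<notin> P'" using h assms unfolding partition_on_def by auto
  then show "P = P'" using h(3) insert_ident[of "{a}" P P'] by simp
qed
lemma inj2: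
  assumes "a \<notin> A"
  shows "inj_on (\<lambda>(P,B). insert (insert a B) (P - {B})) (Sigma {P. partition_on A P} id)"
proof (rule inj_onI, clarsimp)
  fix P B P' B' assume h: "partition_on A P" "B \<in> P" "partition_on A P'" "B' \<in> P'"
    "insert (insert a B) (P - {B}) = insert (insert a B') (P' - {B'})"
  have aB: "a \<notin> C" if "C \<in> P" for C using h that assms unfolding partition_on_def by auto
  have aB': "a \<notin> C" if "C \<in> P'" for C using h that assms unfolding partition_on_def by auto
  have "insert a B \<in> insert (insert a B') (P' - {B'})" using h(5) by blast
  hence "insert a B = insert a B'" using aB' by blast
  hence BB: "B = B'" using aB[OF h(2)] aB'[OF h(4)] insert_ident[of a B B'] by simp
  have "P - {B} = P' - {B}"
  proof -
    have "insert a B \<notin> P - {B}" "insert a B \<notin> P' - {B}" using aB aB' by auto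
    thus ?thesis using h(5) BB insert_ident[of "insert a B" "P - {B}" "P' - {B}"] by simp
  qed
  thus "P = P' \<and> B = B'" using BB h insert_Diff[of B P] insert_Diff[of B' P'] by simp
qed

lemma cover:
  assumes "partition_on (insert a A) Q" "a \<notin> A"
  shows "Q \<in> insert {a} ` {P. partition_on A P} \<union>
     (\<lambda>(P,B). insert (insert a B) (P - {B})) ` (Sigma {P. partition_on A P} id)"
proof -
  have u: "\<Union>Q = insert a A" "{} \<notin> Q" using assms(1) unfolding partition_on_def by auto
  have d: "C \<inter> D = {}" if "C \<in> Q" "D \<in> Q" "C \<noteq> D" for C D
    using assms(1) that unfolding partition_on_def disjoint_def by auto
  obtain B0 where B0: "B0 \<in> Q" "a \<in> B0" using u by auto
  have dis: "a \<notin> C" if "C \<in> Q" "C \<noteq> B0" for C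
    using d[OF that(1) B0(1) that(2)] B0 by auto
  show ?thesis
  proof (cases "B0 = {a}")
    case True
    have "partition_on A (Q - {{a}})"
    proof (rule partition_onI)
      show "\<Union>(Q - {{a}}) = A"
      proof
        show "\<Union>(Q - {{a}}) \<subseteq> A" using u dis True assms(2) by fastforce
        show "A \<subseteq> \<Union>(Q - {{a}})"
        proof
          fix y assume "y \<in> A"
          then obtain C where "C \<in> Q" "y \<in> C" using u by auto
          moreover have "C \<noteq> {a}" using \<open>y \<in> A\<close> \<open>y \<in> C\<close> assms(2) by auto
          ultimately show "y \<in> \<Union>(Q - {{a}})" by auto
        qed
      qed
      show "{} \<notin> Q - {{a}}" using u by auto
      fix p q assume "p \<in> Q - {{a}}" "q \<in> Q - {{a}}" "p \<noteq> q"
      then show "disjnt p q" using d unfolding disjnt_def by auto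
    qed
    moreover have "Q = insert {a} (Q - {{a}})" using B0 True by auto
    ultimately show ?thesis by blast
  next
    case False
    define B where "B = B0 - {a}"
    have Bne: "B \<noteq> {}" using False B0 B_def by auto
    have BQ: "B \<notin> Q - {B0}"
    proof
      assume "B \<in> Q - {B0}"
      then have "B \<inter> B0 = {}" using d B0 by auto
      then show False using Bne B_def by auto
    qed
    have "partition_on A (insert B (Q - {B0}))"
    proof (rule partition_onI)
      show "\<Union>(insert B (Q - {B0})) = A"
      proof
        show "\<Union>(insert B (Q - {B0})) \<subseteq> A" using u dis B_def B0 by fastforce
        show "A \<subseteq> \<Union>(insert B (Q - {B0}))"
        proof
          fix y assume "y \<in> A"
          then obtain C where "C \<in> Q" "y \<in> C" using u by auto
          then show "y \<in> \<Union>(insert B (Q - {B0}))" using B_def \<open>y \<in> A\<close> assms(2) by (cases "C = B0") auto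
        qed
      qed
      show "{} \<notin> insert B (Q - {B0})" using u Bne by auto
      fix p q assume "p \<in> insert B (Q - {B0})" "q \<in> insert B (Q - {B0})" "p \<noteq> q"
      then show "disjnt p q" using d B0 unfolding disjnt_def B_def by auto
    qed
    moreover have "insert B (Q - {B0}) - {B} = Q - {B0}" using BQ by auto
    moreover have "insert a B = B0" using B0 B_def by auto
    moreover have "Q = insert B0 (Q - {B0})" using B0 by auto
    ultimately show ?thesis by (intro UnI2 image_eqI[where x="(insert B (Q - {B0}), B)"]) auto
  qed
qed

lemma part_sum:
  fixes W :: "'a set set \<Rightarrow> 'b::comm_monoid_add"
  assumes "finite A" "a \<notin> A"
  shows "(\<Sum>Q\<in>{Q. partition_on (insert a A) Q}. W Q) =
     (\<Sum>P\<in>{P. partition_on A P}. W (insert {a} P) + (\<Sum>B\<in>P. W (insert (insert a B) (P - {B}))))"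
proof -
  let ?PA = "{P. partition_on A P}"
  let ?S1 = "insert {a} ` ?PA"
  let ?S2 = "(\<lambda>(P,B). insert (insert a B) (P - {B})) ` (Sigma ?PA id)"
  have fin: "finite ?PA" using assms finitely_many_partition_on by blast
  have finS: "finite (Sigma ?PA id)"
    by (rule finite_SigmaI[OF fin]) (use assms finite_elements in auto)
  have eq: "{Q. partition_on (insert a A) Q} = ?S1 \<union> ?S2"
  proof
    show "{Q. partition_on (insert a A) Q} \<subseteq> ?S1 \<union> ?S2" using cover[OF _ assms(2)] by auto
    show "?S1 \<union> ?S2 \<subseteq> {Q. partition_on (insert a A) Q}"
      using part_ins1[OF _ assms(2)] part_ins2[OF _ assms(2)] by auto
  qed
  have disj: "?S1 \<inter> ?S2 = {}"
  proof (rule ccontr)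
    assume "?S1 \<inter> ?S2 \<noteq> {}"
    then obtain P1 P B where h: "partition_on A P" "B \<in> P"
      "insert {a} P1 = insert (insert a B) (P - {B})" by auto
    have "B \<noteq> {}" "a \<notin> B" "{a} \<notin> P" using h assms unfolding partition_on_def by auto
    hence "{a} \<notin> insert (insert a B) (P - {B})" by auto
    with h(3) show False by auto
  qed
  have "(\<Sum>Q\<in>{Q. partition_on (insert a A) Q}. W Q) = sum W ?S1 + sum W ?S2"
    unfolding eq by (rule sum.union_disjoint) (use fin finS disj in auto)
  also have "sum W ?S1 = (\<Sum>P\<in>?PA. W (insert {a} P))"
    using sum.reindex[OF inj1[OF assms(2)], of W] by simp
  also have "sum W ?S2 = (\<Sum>(P,B)\<in>Sigma ?PA id. W (insert (insert a B) (P - {B})))"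
    using sum.reindex[OF inj2[OF assms(2)], of W] by (simp add: case_prod_unfold comp_def)
  also have "\<dots> = (\<Sum>P\<in>?PA. \<Sum>B\<in>P. W (insert (insert a B) (P - {B})))"
    by (subst sum.Sigma[symmetric]) (use fin assms finite_elements in auto)
  finally show ?thesis by (simp add: sum.distrib)
qed


lemma smooth_D0: "smooth h \<Longrightarrow> (h has_real_derivative deriv h y) (at y)"
  using smooth_D[of h 0 y] by simp

lemma term_deriv:
  assumes sf: "smooth f" and sg: "smooth g"
  shows "((\<lambda>x. (deriv ^^ k) f (g x) * (\<Prod>B\<in>P. (Omega ^^ c B) g x)) has_real_derivative
     (deriv ^^ Suc k) f (g x) * deriv g x * (\<Prod>B\<in>P. (Omega ^^ c B) g x) +
     (deriv ^^ k) f (g x) * (\<Sum>B\<in>P. deriv ((Omega ^^ c B) g) x * (\<Prod>C\<in>P-{B}. (Omega ^^ c C) g x))) (at x)"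
proof -
  have p: "((\<lambda>x. \<Prod>B\<in>P. (Omega ^^ c B) g x) has_real_derivative
     (\<Sum>B\<in>P. deriv ((Omega ^^ c B) g) x * (\<Prod>C\<in>P-{B}. (Omega ^^ c C) g x))) (at x)"
    by (rule has_field_derivative_prod) (intro smooth_D0 smooth_Omega_pow sg)
  have c: "((\<lambda>x. (deriv ^^ k) f (g x)) has_real_derivative (deriv ^^ Suc k) f (g x) * deriv g x) (at x)"
    by (rule DERIV_chain2[OF smooth_D[OF sf] smooth_D0[OF sg]])
  show ?thesis using DERIV_mult[OF c p] by (simp add: algebra_simps)
qed

lemma Omega_at: "Omega h x = x * deriv h x" unfolding Omega_def by simp

theorem main:
  fixes f g :: "real \<Rightarrow> real" and n :: nat and x :: real
  assumes sf: "smooth f" and sg: "smooth g"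
  shows "(Omega ^^ n) (f \<circ> g) x =
    (\<Sum>\<pi> \<in> {P. partition_on {1..n} P}.
       (deriv ^^ card \<pi>) f (g x) * (\<Prod>B\<in>\<pi>. (Omega ^^ card B) g x))"
proof -
  define W where "W Q x = (deriv ^^ card Q) f (g x) * (\<Prod>B\<in>Q. (Omega ^^ card B) g x)" for Q :: "nat set set" and x
  define T where "T n x = (\<Sum>\<pi> \<in> {P. partition_on {1..n} P}. W \<pi> x)" for n x
  have "(Omega ^^ n) (f \<circ> g) = T n"
  proof (induction n)
    case 0
    have "{P. partition_on {1..0::nat} P} = {{}}" using partition_on_empty by auto
    then show ?case by (auto simp: T_def W_def)
  next
    case (Suc n)
    show ?case
    proof
      fix x
      let ?PA = "{P. partition_on {1..n} P}"
      let ?D = "\<lambda>P. (deriv ^^ Suc (card P)) f (g x) * deriv g x * (\<Prod>B\<in>P. (Omega ^^ card B) g x) +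
         (deriv ^^ card P) f (g x) * (\<Sum>B\<in>P. deriv ((Omega ^^ card B) g) x * (\<Prod>C\<in>P-{B}. (Omega ^^ card C) g x))"
      have d: "(T n has_real_derivative (\<Sum>P\<in>?PA. ?D P)) (at x)"
        unfolding T_def W_def
        by (rule DERIV_sum) (rule term_deriv[OF sf sg])
      have fin: "finite ?PA" using finitely_many_partition_on by blast
      have nin: "Suc n \<notin> {1..n}" by simp
      have "(Omega ^^ Suc n) (f \<circ> g) x = Omega (T n) x" using Suc by (simp del: o_apply add: comp_def)
      also have "\<dots> = x * (\<Sum>P\<in>?PA. ?D P)" using Omega_at[of "T n" x] DERIV_imp_deriv[OF d] by (simp only:)
      also have "\<dots> = (\<Sum>P\<in>?PA. W (insert {Suc n} P) x +
           (\<Sum>B\<in>P. W (insert (insert (Suc n) B) (P - {B})) x))"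
        unfolding sum_distrib_left[of x]
      proof (rule sum.cong[OF refl])
        fix P assume P: "P \<in> ?PA"
        have finP: "finite P" using P finite_elements by blast
        have nP: "Suc n \<notin> B" if "B \<in> P" for B
        proof -
          have "B \<subseteq> {1..n}" using P that unfolding partition_on_def by auto
          then show ?thesis by auto
        qed
        have finB: "finite B" if "B \<in> P" for B
        proof -
          have "B \<subseteq> {1..n}" using P that unfolding partition_on_def by auto
          then show ?thesis using finite_subset by blast
        qed
        have s1: "{Suc n} \<notin> P" using nP by auto
        have w1: "W (insert {Suc n} P) x = (deriv ^^ Suc (card P)) f (g x) * (x * deriv g x) * (\<Prod>B\<in>P. (Omega ^^ card B) g x)"
          unfolding W_def using finP s1 by (simp add: Omega_at mult.assoc)
        have w2: "W (insert (insert (Suc n) B) (P - {B})) x =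
            (deriv ^^ card P) f (g x) * (x * (deriv ((Omega ^^ card B) g) x * (\<Prod>C\<in>P-{B}. (Omega ^^ card C) g x)))"
          if B: "B \<in> P" for B
        proof -
          have ni: "insert (Suc n) B \<notin> P - {B}" using nP by auto
          have cP: "card (insert (insert (Suc n) B) (P - {B})) = card P"
            using ni finP B by (simp add: card_Diff_singleton) (metis card_Diff1_less card_gt_0_iff empty_iff Suc_pred)
          have cB: "card (insert (Suc n) B) = Suc (card B)" using finB[OF B] nP[OF B] by simp
          show ?thesis unfolding W_def cP using ni finP cB
            by (simp add: Omega_at mult.assoc)
        qed
        show "x * ?D P = W (insert {Suc n} P) x + (\<Sum>B\<in>P. W (insert (insert (Suc n) B) (P - {B})) x)"
          unfolding w1 using w2 by (simp add: algebra_simps sum_distrib_left)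
      qed
      also have "\<dots> = T (Suc n) x"
        unfolding T_def using part_sum[OF _ nin, of "\<lambda>Q. W Q x"] by (simp add: atLeastAtMostSuc_conv)
      finally show "(Omega ^^ Suc n) (f \<circ> g) x = T (Suc n) x" .
    qed
  qed
  then show ?thesis unfolding T_def W_def by simp
qed


theorem lemma4p7:
  fixes f g :: "real \<Rightarrow> real" and n :: nat and x :: real
  assumes "n \<ge> 1"
    and "\<forall>k y. (deriv ^^ k) f differentiable at y"
    and "\<forall>k y. (deriv ^^ k) g differentiable at y"
  shows "(Omega ^^ n) (f \<circ> g) x =
    (\<Sum>\<pi> \<in> {P. partition_on {1..n} P}.
       (deriv ^^ card \<pi>) f (g x) * (\<Prod>B\<in>\<pi>. (Omega ^^ card B) g x))"
  using main[of f g n x] assms(2,3) unfolding smooth_def by blast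

end
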